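(* A positive semidefinite $d\times d$ matrix $\xi$ is a correlation matrix if and only if $\mathcal P^\dagger(\xi)=I$ for some quantum channel $\mathcal P$ on $S$ satisfying $\mathcal P(\mathsf{St}(S))=\mathsf P(S)$.
   Context: $S$ is a $d$-dimensional quantum system with non-degenerate Hamiltonian $H=\sum_i E_i|i\rangle\langle i|$, $E_1<\dots<E_d$; matrices are written in the eigenbasis $\{|i\rangle\}$. $\mathsf{St}(S)$ is the set of density matrices; $\mathsf P(S)$ is the set of passive states, i.e. states $\sum_i p_i|i\rangle\langle i|$ with $p_1\ge\dots\ge p_d$. A correlation matrix is a positive semidefinite matrix $\xi$ with $\xi_{ii}=1$ for all $i$. $\mathcal P^\dagger$ is the adjoint map: $\mathrm{Tr}[A\mathcal P(B)]=\mathrm{Tr}[\mathcal P^\dagger(A)B]$. *)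

theory Defs
  imports "Jordan_Normal_Form.Matrix"
begin

(* Matrices on a d-dimensional system, written in the energy eigenbasis
   |0>,...,|d-1> (indices 0-based, ordered by increasing energy). *)

definition mtrace :: "complex mat \<Rightarrow> complex" where
  "mtrace A = (\<Sum>i<dim_row A. A $$ (i, i))"

definition psd :: "nat \<Rightarrow> complex mat \<Rightarrow> bool" where
  "psd n A \<longleftrightarrow> A \<in> carrier_mat n n \<and>
     (\<forall>v :: nat \<Rightarrow> complex.
        let q = (\<Sum>i<n. \<Sum>j<n. cnj (v i) * A $$ (i, j) * v j)
        in Im q = 0 \<and> Re q \<ge> 0)"

definition correlation_matrix :: "nat \<Rightarrow> complex mat \<Rightarrow> bool" where
  "correlation_matrix d X \<longleftrightarrow> psd d X \<and> (\<forall>i<d. X $$ (i, i) = 1)"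

definition states :: "nat \<Rightarrow> complex mat set" where
  "states d = {\<rho>. psd d \<rho> \<and> mtrace \<rho> = 1}"

definition passive_states :: "nat \<Rightarrow> complex mat set" where
  "passive_states d = {\<rho>. \<rho> \<in> states d \<and>
      (\<forall>i<d. \<forall>j<d. i \<noteq> j \<longrightarrow> \<rho> $$ (i, j) = 0) \<and>
      (\<forall>i j. i \<le> j \<and> j < d \<longrightarrow> Re (\<rho> $$ (j, j)) \<le> Re (\<rho> $$ (i, i)))}"

definition linear_map_on :: "nat \<Rightarrow> (complex mat \<Rightarrow> complex mat) \<Rightarrow> bool" where
  "linear_map_on d P \<longleftrightarrow>
     (\<forall>A \<in> carrier_mat d d. P A \<in> carrier_mat d d) \<and>
     (\<forall>A \<in> carrier_mat d d. \<forall>B \<in> carrier_mat d d. P (A + B) = P A + P B) \<and>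
     (\<forall>A \<in> carrier_mat d d. \<forall>c. P (c \<cdot>\<^sub>m A) = c \<cdot>\<^sub>m P A)"

(* (P \<otimes> id_n) applied to an (n*d) x (n*d) matrix viewed as an n x n array of
   d x d blocks: block (k,l) is mapped by P *)
definition ampliate :: "nat \<Rightarrow> nat \<Rightarrow> (complex mat \<Rightarrow> complex mat) \<Rightarrow> complex mat \<Rightarrow> complex mat" where
  "ampliate d n P X = mat (n * d) (n * d) (\<lambda>(r, c).
      P (mat d d (\<lambda>(a, b). X $$ ((r div d) * d + a, (c div d) * d + b))) $$ (r mod d, c mod d))"

definition completely_positive :: "nat \<Rightarrow> (complex mat \<Rightarrow> complex mat) \<Rightarrow> bool" where
  "completely_positive d P \<longleftrightarrow>
     (\<forall>n. \<forall>X. psd (n * d) X \<longrightarrow> psd (n * d) (ampliate d n P X))"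

definition trace_preserving :: "nat \<Rightarrow> (complex mat \<Rightarrow> complex mat) \<Rightarrow> bool" where
  "trace_preserving d P \<longleftrightarrow> (\<forall>A \<in> carrier_mat d d. mtrace (P A) = mtrace A)"

definition quantum_channel :: "nat \<Rightarrow> (complex mat \<Rightarrow> complex mat) \<Rightarrow> bool" where
  "quantum_channel d P \<longleftrightarrow> linear_map_on d P \<and> completely_positive d P \<and> trace_preserving d P"

definition is_adjoint :: "nat \<Rightarrow> (complex mat \<Rightarrow> complex mat) \<Rightarrow> (complex mat \<Rightarrow> complex mat) \<Rightarrow> bool" where
  "is_adjoint d P Q \<longleftrightarrow>
     (\<forall>A \<in> carrier_mat d d. Q A \<in> carrier_mat d d) \<and>
     (\<forall>A \<in> carrier_mat d d. \<forall>B \<in> carrier_mat d d. mtrace (A * P B) = mtrace (Q A * B))"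

end

theory Submission
  imports Defs
begin


lemma sum_nd: "(\<Sum>r<n*d. f r) = (\<Sum>b<n. \<Sum>a<d. f (b*d+a::nat) :: 'a::comm_monoid_add)"
proof (induction n)
  case 0 then show ?case by simp
next
  case (Suc n)
  have u: "{..<Suc n * d} = {..<n*d} \<union> {n*d..<n*d+d}" by auto
  have s: "(\<Sum>r\<in>{n*d..<n*d+d}. f r) = (\<Sum>a<d. f (n*d+a))"
  proof -
    have "(\<Sum>r\<in>{0+n*d..<d+n*d}. f r) = (\<Sum>a\<in>{0..<d}. f (a + n*d))"
      by (rule sum.shift_bounds_nat_ivl)
    then show ?thesis by (simp add: lessThan_atLeast0 add.commute)
  qed
  have "(\<Sum>r<Suc n*d. f r) = (\<Sum>r<n*d. f r) + (\<Sum>r\<in>{n*d..<n*d+d}. f r)"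
    unfolding u by (rule sum.union_disjoint) auto
  then show ?case using Suc s by simp
qed

lemma ifz1: "(if P then a else 0) * b = (if P then a * b else (0::'a::mult_zero))" by simp
lemma ifz2: "b * (if P then a else 0) = (if P then b * a else (0::'a::mult_zero))" by simp

definition dmat :: "nat \<Rightarrow> (nat \<Rightarrow> complex) \<Rightarrow> complex mat" where
  "dmat d f = mat d d (\<lambda>(i,j). if i = j then f i else 0)"

lemma dmat_carrier[simp]: "dmat d f \<in> carrier_mat d d" by (simp add: dmat_def)
lemma dmat_index[simp]: "i < d \<Longrightarrow> j < d \<Longrightarrow> dmat d f $$ (i,j) = (if i = j then f i else 0)"
  by (simp add: dmat_def)
lemma dmat_dim[simp]: "dim_row (dmat d f) = d" "dim_col (dmat d f) = d" by (simp_all add: dmat_def)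

lemma mtrace_dmat: "mtrace (dmat d f) = (\<Sum>i<d. f i)"
  by (simp add: mtrace_def)

lemma mtrace_mult_dmat: assumes "A \<in> carrier_mat d d"
  shows "mtrace (A * dmat d f) = (\<Sum>i<d. A $$ (i,i) * f i)"
proof -
  have "mtrace (A * dmat d f) = (\<Sum>i<d. \<Sum>l<d. A $$ (i,l) * dmat d f $$ (l,i))"
    using assms by (simp add: mtrace_def scalar_prod_def lessThan_atLeast0)
  also have "\<dots> = (\<Sum>i<d. \<Sum>l<d. if l = i then A $$ (i,i) * f i else 0)"
    by (intro sum.cong refl) auto
  also have "\<dots> = (\<Sum>i<d. A $$ (i,i) * f i)" by simp
  finally show ?thesis .
qed

lemma mtrace_dmat_mult: assumes "B \<in> carrier_mat d d"
  shows "mtrace (dmat d f * B) = (\<Sum>i<d. f i * B $$ (i,i))"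
proof -
  have "mtrace (dmat d f * B) = (\<Sum>i<d. \<Sum>l<d. dmat d f $$ (i,l) * B $$ (l,i))"
    using assms by (simp add: mtrace_def scalar_prod_def lessThan_atLeast0)
  also have "\<dots> = (\<Sum>i<d. \<Sum>l<d. if l = i then f i * B $$ (i,i) else 0)"
    by (intro sum.cong refl) auto
  also have "\<dots> = (\<Sum>i<d. f i * B $$ (i,i))" by simp
  finally show ?thesis .
qed

lemma psd_dmat: assumes "\<And>i. i < d \<Longrightarrow> Im (f i) = 0 \<and> Re (f i) \<ge> 0"
  shows "psd d (dmat d f)"
  unfolding psd_def Let_def
proof (intro conjI allI)
  fix v :: "nat \<Rightarrow> complex"
  have e: "(\<Sum>i<d. \<Sum>j<d. cnj (v i) * dmat d f $$ (i, j) * v j) = (\<Sum>i<d. complex_of_real (Re (f i) * (cmod (v i))^2))"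
  proof (rule sum.cong)
    fix i assume i: "i \<in> {..<d}"
    have "(\<Sum>j<d. cnj (v i) * dmat d f $$ (i, j) * v j) = cnj (v i) * f i * v i"
      using i by (auto simp: ifz1 ifz2)
    also have "\<dots> = f i * (cnj (v i) * v i)" by simp
    also have "\<dots> = complex_of_real (Re (f i)) * complex_of_real ((cmod (v i))^2)"
    proof -
      have "f i = complex_of_real (Re (f i))" using assms[of i] i by (simp add: complex_eq_iff)
      moreover have "cnj (v i) * v i = complex_of_real ((cmod (v i))^2)"
        by (metis complex_norm_square mult.commute)
      ultimately show ?thesis by metis
    qed
    also have "\<dots> = complex_of_real (Re (f i) * (cmod (v i))^2)" by simp
    finally show "(\<Sum>j<d. cnj (v i) * dmat d f $$ (i, j) * v j) = complex_of_real (Re (f i) * (cmod (v i))^2)" .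
  qed simp
  show "Im (\<Sum>i<d. \<Sum>j<d. cnj (v i) * dmat d f $$ (i, j) * v j) = 0" unfolding e by (simp only: Im_sum Im_complex_of_real sum.neutral_const)
  show "Re (\<Sum>i<d. \<Sum>j<d. cnj (v i) * dmat d f $$ (i, j) * v j) \<ge> 0" unfolding e using assms
  proof -
    have "(\<Sum>i<d. Re (f i) * (cmod (v i))^2) \<ge> 0"
      by (rule sum_nonneg) (use assms in simp)
    then show "Re (\<Sum>i<d. complex_of_real (Re (f i) * (cmod (v i))^2)) \<ge> 0"
      by (simp only: Re_sum Re_complex_of_real)
  qed
qed (rule dmat_carrier)

lemma psd_diag: assumes "psd d A" "i < d" shows "Im (A $$ (i,i)) = 0 \<and> Re (A $$ (i,i)) \<ge> 0"
proof -
  define v where "v = (\<lambda>j::nat. if j = i then (1::complex) else 0)"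
  have "(\<Sum>k<d. \<Sum>j<d. cnj (v k) * A $$ (k, j) * v j) = A $$ (i,i)"
  proof -
    have c: "\<And>k. cnj (v k) = v k" by (simp add: v_def)
    have "(\<Sum>k<d. \<Sum>j<d. cnj (v k) * A $$ (k, j) * v j) = (\<Sum>k<d. if k = i then (\<Sum>j<d. if j = i then A $$ (i,i) else 0) else 0)"
      unfolding c by (intro sum.cong refl) (simp add: v_def ifz2)
    also have "\<dots> = A $$ (i,i)" using assms(2) by simp
    finally show ?thesis .
  qed
  moreover have "Im (\<Sum>k<d. \<Sum>j<d. cnj (v k) * A $$ (k, j) * v j) = 0 \<and> Re (\<Sum>k<d. \<Sum>j<d. cnj (v k) * A $$ (k, j) * v j) \<ge> 0"
    using assms(1) unfolding psd_def Let_def by blast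
  ultimately show ?thesis by simp
qed


lemma tri_swap: "(\<Sum>i<(d::nat). \<Sum>k\<in>{i..<d}. g i k) = (\<Sum>k<d. \<Sum>i\<in>{..k}. g i k :: 'a::comm_monoid_add)"
proof (induction d)
  case 0 then show ?case by simp
next
  case (Suc d)
  have "(\<Sum>i<Suc d. \<Sum>k\<in>{i..<Suc d}. g i k) = (\<Sum>i<d. \<Sum>k\<in>{i..<Suc d}. g i k) + g d d"
    by simp
  also have "(\<Sum>i<d. \<Sum>k\<in>{i..<Suc d}. g i k) = (\<Sum>i<d. (\<Sum>k\<in>{i..<d}. g i k) + g i d)"
    by (intro sum.cong refl) simp
  also have "\<dots> = (\<Sum>i<d. \<Sum>k\<in>{i..<d}. g i k) + (\<Sum>i<d. g i d)"
    by (simp add: sum.distrib)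
  finally have "(\<Sum>i<Suc d. \<Sum>k\<in>{i..<Suc d}. g i k) = (\<Sum>k<d. \<Sum>i\<in>{..k}. g i k) + ((\<Sum>i<d. g i d) + g d d)"
    using Suc by (simp add: add.assoc)
  also have "(\<Sum>i<d. g i d) + g d d = (\<Sum>i\<in>{..d}. g i d)"
    by (simp add: lessThan_Suc_atMost[symmetric])
  finally show ?case by simp
qed

definition Pmap :: "nat \<Rightarrow> complex mat \<Rightarrow> complex mat" where
  "Pmap d A = dmat d (\<lambda>i. \<Sum>k\<in>{i..<d}. A $$ (k,k) / of_nat (Suc k))"

definition Qmap :: "nat \<Rightarrow> complex mat \<Rightarrow> complex mat" where
  "Qmap d A = dmat d (\<lambda>i. (\<Sum>j\<in>{..i}. A $$ (j,j)) / of_nat (Suc i))"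

lemma nz: "(1 + of_nat k :: complex) \<noteq> 0"
  by (metis of_nat_Suc of_nat_eq_0_iff nat.distinct(1) add.commute)

lemma trace_Pmap: "mtrace (Pmap d A) = (\<Sum>k<d. A $$ (k,k))"
proof -
  have "mtrace (Pmap d A) = (\<Sum>i<d. \<Sum>k\<in>{i..<d}. A $$ (k,k) / of_nat (Suc k))"
    by (simp add: Pmap_def mtrace_dmat)
  also have "\<dots> = (\<Sum>k<d. \<Sum>i\<in>{..k}. A $$ (k,k) / of_nat (Suc k))" by (rule tri_swap)
  also have "\<dots> = (\<Sum>k<d. A $$ (k,k))"
    by (intro sum.cong refl) (simp add: field_simps nz)
  finally show ?thesis .
qed

lemma linear_Pmap: "linear_map_on d (Pmap d)"
  unfolding linear_map_on_def
proof (intro conjI ballI allI)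
  fix A B :: "complex mat" assume A: "A \<in> carrier_mat d d" and B: "B \<in> carrier_mat d d"
  show "Pmap d (A + B) = Pmap d A + Pmap d B"
  proof (rule eq_matI)
    fix i j assume "i < dim_row (Pmap d A + Pmap d B)" "j < dim_col (Pmap d A + Pmap d B)"
    then have ij: "i < d" "j < d" by (auto simp: Pmap_def)
    have "(\<Sum>k\<in>{i..<d}. (A + B) $$ (k,k) / of_nat (Suc k)) = (\<Sum>k\<in>{i..<d}. A $$ (k,k) / of_nat (Suc k)) + (\<Sum>k\<in>{i..<d}. B $$ (k,k) / of_nat (Suc k))"
      unfolding sum.distrib[symmetric] using A B by (intro sum.cong refl) (auto simp: add_divide_distrib)
    then show "Pmap d (A + B) $$ (i, j) = (Pmap d A + Pmap d B) $$ (i, j)"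
      using ij by (cases "i = j") (simp_all add: Pmap_def)
  qed (auto simp: Pmap_def)
next
  fix A :: "complex mat" and c :: complex assume A: "A \<in> carrier_mat d d"
  show "Pmap d (c \<cdot>\<^sub>m A) = c \<cdot>\<^sub>m Pmap d A"
  proof (rule eq_matI)
    fix i j assume "i < dim_row (c \<cdot>\<^sub>m Pmap d A)" "j < dim_col (c \<cdot>\<^sub>m Pmap d A)"
    then have ij: "i < d" "j < d" by (auto simp: Pmap_def)
    have "(\<Sum>k\<in>{i..<d}. (c \<cdot>\<^sub>m A) $$ (k,k) / of_nat (Suc k)) = c * (\<Sum>k\<in>{i..<d}. A $$ (k,k) / of_nat (Suc k))"
      unfolding sum_distrib_left using A by (intro sum.cong refl) auto
    then show "Pmap d (c \<cdot>\<^sub>m A) $$ (i, j) = (c \<cdot>\<^sub>m Pmap d A) $$ (i, j)"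
      using ij by (cases "i = j") (simp_all add: Pmap_def)
  qed (auto simp: Pmap_def)
qed (simp add: Pmap_def)

lemma adjoint_PQ: "is_adjoint d (Pmap d) (Qmap d)"
  unfolding is_adjoint_def
proof (intro conjI ballI)
  fix A B :: "complex mat" assume A: "A \<in> carrier_mat d d" and B: "B \<in> carrier_mat d d"
  have "mtrace (A * Pmap d B) = (\<Sum>i<d. A $$ (i,i) * (\<Sum>k\<in>{i..<d}. B $$ (k,k) / of_nat (Suc k)))"
    unfolding Pmap_def using A by (rule mtrace_mult_dmat)
  also have "\<dots> = (\<Sum>i<d. \<Sum>k\<in>{i..<d}. A $$ (i,i) * B $$ (k,k) / of_nat (Suc k))"
    by (simp add: sum_distrib_left)
  also have "\<dots> = (\<Sum>k<d. \<Sum>i\<in>{..k}. A $$ (i,i) * B $$ (k,k) / of_nat (Suc k))" by (rule tri_swap)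
  also have "\<dots> = (\<Sum>k<d. (\<Sum>j\<in>{..k}. A $$ (j,j)) / of_nat (Suc k) * B $$ (k,k))"
    by (intro sum.cong refl) (simp add: sum_distrib_right sum_divide_distrib)
  also have "\<dots> = mtrace (Qmap d A * B)"
    unfolding Qmap_def using B by (rule mtrace_dmat_mult[symmetric])
  finally show "mtrace (A * Pmap d B) = mtrace (Qmap d A * B)" .
qed (simp add: Qmap_def)


lemma dm: fixes a b d :: nat assumes "a < d" shows "(b*d+a) div d = b" "(b*d+a) mod d = a"
  using assms by simp_all

lemma lt_nd: fixes a b d n :: nat assumes "a < d" "b < n" shows "b*d+a < n*d"
proof -
  have "b*d+a < b*d+d" using assms by simp
  also have "\<dots> = Suc b * d" by simp
  also have "\<dots> \<le> n*d" using assms by (intro mult_right_mono) auto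
  finally show ?thesis .
qed

lemma sum_if_const: "(\<Sum>x\<in>A. if P then f x else 0) = (if P then sum f A else 0)"
  by (cases P) simp_all

lemma cp_Pmap: assumes d0: "0 < d" shows "completely_positive d (Pmap d)"
  unfolding completely_positive_def
proof (intro allI impI)
  fix n X assume X: "psd (n*d) X"
  define Y where "Y = ampliate d n (Pmap d) X"
  have Yent: "Y $$ (b*d+a, b'*d+a') = (if a = a' then \<Sum>k\<in>{a..<d}. X $$ (b*d+k, b'*d+k) / of_nat (Suc k) else 0)"
    if "b < n" "a < d" "b' < n" "a' < d" for b a b' a'
  proof -
    have 1: "b*d+a < n*d" "b'*d+a' < n*d" using that lt_nd by auto
    show ?thesis unfolding Y_def ampliate_def using 1 that
      by (simp add: dm Pmap_def)
  qed
  have Ycar: "Y \<in> carrier_mat (n*d) (n*d)" unfolding Y_def ampliate_def by simp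
  show "psd (n * d) (ampliate d n (Pmap d) X)"
    unfolding Y_def[symmetric] psd_def Let_def
  proof (intro conjI allI Ycar)
    fix v :: "nat \<Rightarrow> complex"
    define T where "T a k b b' = cnj (v (b*d+a)) * X $$ (b*d+k, b'*d+k) * v (b'*d+a)" for a k b b'
    define w where "w a k r = (if r mod d = k then v (r div d * d + a) else 0)" for a k r
    define qX where "qX u = (\<Sum>r<n*d. \<Sum>c<n*d. cnj (u r) * X $$ (r, c) * u c)" for u
    define cR where "cR k = complex_of_real (1 / real (Suc k))" for k
    have qXw: "qX (w a k) = (\<Sum>b<n. \<Sum>b'<n. T a k b b')" if "k < d" for a k
    proof -
      have "qX (w a k) = (\<Sum>b<n. \<Sum>a1<d. \<Sum>b'<n. \<Sum>a2<d. cnj (w a k (b*d+a1)) * X $$ (b*d+a1, b'*d+a2) * w a k (b'*d+a2))"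
        unfolding qX_def sum_nd by simp
      also have "\<dots> = (\<Sum>b<n. \<Sum>a1<d. \<Sum>b'<n. \<Sum>a2<d. if a1 = k then (if a2 = k then T a k b b' else 0) else 0)"
        by (intro sum.cong refl) (auto simp: w_def T_def dm)
      also have "\<dots> = (\<Sum>b<n. \<Sum>b'<n. T a k b b')" using that by (simp add: sum_if_const)
      finally show ?thesis .
    qed
    have q: "(\<Sum>r<n*d. \<Sum>c<n*d. cnj (v r) * Y $$ (r, c) * v c) = (\<Sum>a<d. \<Sum>k\<in>{a..<d}. cR k * qX (w a k))"
    proof -
      have "(\<Sum>r<n*d. \<Sum>c<n*d. cnj (v r) * Y $$ (r, c) * v c) = (\<Sum>b<n. \<Sum>a<d. \<Sum>b'<n. \<Sum>a'<d. cnj (v (b*d+a)) * Y $$ (b*d+a, b'*d+a') * v (b'*d+a'))"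
        unfolding sum_nd by simp
      also have "\<dots> = (\<Sum>b<n. \<Sum>a<d. \<Sum>b'<n. \<Sum>a'<d. if a' = a then cnj (v (b*d+a)) * (\<Sum>k\<in>{a..<d}. X $$ (b*d+k, b'*d+k) / of_nat (Suc k)) * v (b'*d+a) else 0)"
        by (intro sum.cong refl) (simp add: Yent)
      also have "\<dots> = (\<Sum>b<n. \<Sum>a<d. \<Sum>b'<n. cnj (v (b*d+a)) * (\<Sum>k\<in>{a..<d}. X $$ (b*d+k, b'*d+k) / of_nat (Suc k)) * v (b'*d+a))"
        by (intro sum.cong refl) simp
      also have "\<dots> = (\<Sum>b<n. \<Sum>a<d. \<Sum>b'<n. \<Sum>k\<in>{a..<d}. cR k * T a k b b')"
        by (intro sum.cong refl) (simp add: T_def cR_def sum_distrib_left sum_distrib_right field_simps)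
      also have "\<dots> = (\<Sum>a<d. \<Sum>b<n. \<Sum>b'<n. \<Sum>k\<in>{a..<d}. cR k * T a k b b')"
        by (rule sum.swap)
      also have "\<dots> = (\<Sum>a<d. \<Sum>b<n. \<Sum>k\<in>{a..<d}. \<Sum>b'<n. cR k * T a k b b')"
        by (rule sum.cong[OF refl], rule sum.cong[OF refl], rule sum.swap)
      also have "\<dots> = (\<Sum>a<d. \<Sum>k\<in>{a..<d}. \<Sum>b<n. \<Sum>b'<n. cR k * T a k b b')"
        by (rule sum.cong[OF refl], rule sum.swap)
      also have "\<dots> = (\<Sum>a<d. \<Sum>k\<in>{a..<d}. cR k * qX (w a k))"
        by (intro sum.cong refl) (simp add: qXw sum_distrib_left)
      finally show ?thesis .
    qed
    have qv: "Im (qX (w a k)) = 0 \<and> Re (qX (w a k)) \<ge> 0" for a k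
      using X unfolding psd_def Let_def qX_def by blast
    have Im0: "Im (cR k * qX (w a k)) = 0" for a k using qv[of a k] by (simp add: cR_def)
    have Re0: "Re (cR k * qX (w a k)) \<ge> 0" for a k using qv[of a k] by (simp add: cR_def)
    show "Im (\<Sum>r<n*d. \<Sum>c<n*d. cnj (v r) * Y $$ (r, c) * v c) = 0"
      unfolding q by (simp only: Im_sum Im0 sum.neutral_const)
    show "Re (\<Sum>r<n*d. \<Sum>c<n*d. cnj (v r) * Y $$ (r, c) * v c) \<ge> 0"
      unfolding q Re_sum by (intro sum_nonneg Re0)
  qed
qed


lemma psd_diag_real: assumes "psd d A" "k < d"
  shows "A $$ (k,k) = complex_of_real (Re (A $$ (k,k)))" "Re (A $$ (k,k)) \<ge> 0"
  using psd_diag[OF assms] by (simp_all add: complex_eq_iff)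

lemma mtrace_car: "A \<in> carrier_mat d d \<Longrightarrow> mtrace A = (\<Sum>k<d. A $$ (k,k))"
  by (simp add: mtrace_def)

lemma Pmap_real: assumes "psd d A"
  shows "Pmap d A = dmat d (\<lambda>i. complex_of_real (\<Sum>k\<in>{i..<d}. Re (A $$ (k,k)) / real (Suc k)))"
  unfolding Pmap_def
proof (rule arg_cong[where f="dmat d"], rule ext)
  fix i
  show "(\<Sum>k\<in>{i..<d}. A $$ (k,k) / of_nat (Suc k)) = complex_of_real (\<Sum>k\<in>{i..<d}. Re (A $$ (k,k)) / real (Suc k))"
    unfolding of_real_sum
  proof (rule sum.cong[OF refl])
    fix k assume "k \<in> {i..<d}"
    then have "A $$ (k,k) = complex_of_real (Re (A $$ (k,k)))" using psd_diag_real assms by auto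
    then show "A $$ (k,k) / of_nat (Suc k) = complex_of_real (Re (A $$ (k,k)) / real (Suc k))"
      by (metis of_real_divide of_real_of_nat_eq)
  qed
qed

lemma image_P: assumes d0: "0 < d" shows "Pmap d ` states d = passive_states d"
proof
  show "Pmap d ` states d \<subseteq> passive_states d"
  proof
    fix \<sigma> assume "\<sigma> \<in> Pmap d ` states d"
    then obtain \<rho> where r: "\<rho> \<in> states d" and s: "\<sigma> = Pmap d \<rho>" by auto
    have psr: "psd d \<rho>" and tr: "mtrace \<rho> = 1" using r by (auto simp: states_def)
    have car: "\<rho> \<in> carrier_mat d d" using psr by (simp add: psd_def)
    define g where "g i = (\<Sum>k\<in>{i..<d}. Re (\<rho> $$ (k,k)) / real (Suc k))" for i
    have s2: "\<sigma> = dmat d (\<lambda>i. complex_of_real (g i))" unfolding s g_def by (rule Pmap_real[OF psr])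
    have gnn: "g i \<ge> 0" for i unfolding g_def
      by (rule sum_nonneg) (use psd_diag_real(2)[OF psr] in auto)
    have gmono: "g j \<le> g i" if "i \<le> j" for i j unfolding g_def
      by (rule sum_mono2) (use that psd_diag_real(2)[OF psr] in auto)
    have "psd d \<sigma>" unfolding s2 by (rule psd_dmat) (simp add: gnn)
    moreover have "mtrace \<sigma> = 1" unfolding s trace_Pmap using tr mtrace_car[OF car] by simp
    ultimately show "\<sigma> \<in> passive_states d"
      unfolding passive_states_def states_def using gmono by (auto simp: s2)
  qed
next
  show "passive_states d \<subseteq> Pmap d ` states d"
  proof
    fix \<sigma> assume "\<sigma> \<in> passive_states d"
    then have ps: "psd d \<sigma>" and tr: "mtrace \<sigma> = 1"
      and off: "\<And>i j. i < d \<Longrightarrow> j < d \<Longrightarrow> i \<noteq> j \<Longrightarrow> \<sigma> $$ (i,j) = 0"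
      and mono: "\<And>i j. i \<le> j \<Longrightarrow> j < d \<Longrightarrow> Re (\<sigma> $$ (j,j)) \<le> Re (\<sigma> $$ (i,i))"
      unfolding passive_states_def states_def by auto
    have car: "\<sigma> \<in> carrier_mat d d" using ps by (simp add: psd_def)
    define s where "s k = (if k < d then Re (\<sigma> $$ (k,k)) else 0)" for k
    have sdec: "s (Suc k) \<le> s k" if "k < d" for k
    proof (cases "Suc k < d")
      case True then show ?thesis using mono[of k "Suc k"] that by (simp add: s_def)
    next
      case False then show ?thesis using psd_diag_real(2)[OF ps that] that by (simp add: s_def)
    qed
    define \<rho> where "\<rho> = dmat d (\<lambda>k. complex_of_real (real (Suc k) * (s k - s (Suc k))))"
    have psr: "psd d \<rho>" unfolding \<rho>_def by (rule psd_dmat) (simp add: sdec)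
    have P: "Pmap d \<rho> = \<sigma>"
    proof -
      have "Pmap d \<rho> = dmat d (\<lambda>i. complex_of_real (\<Sum>k\<in>{i..<d}. Re (\<rho> $$ (k,k)) / real (Suc k)))"
        by (rule Pmap_real[OF psr])
      also have "\<dots> = dmat d (\<lambda>i. complex_of_real (s i))"
      proof (rule arg_cong[where f="dmat d"], rule ext)
        fix i
        show "complex_of_real (\<Sum>k\<in>{i..<d}. Re (\<rho> $$ (k,k)) / real (Suc k)) = complex_of_real (s i)"
        proof (cases "i \<le> d")
          case True
          have "(\<Sum>k\<in>{i..<d}. Re (\<rho> $$ (k,k)) / real (Suc k)) = (\<Sum>k\<in>{i..<d}. - (s (Suc k) - s k))"
            by (intro sum.cong refl) (simp add: \<rho>_def)
          also have "\<dots> = - (s d - s i)" using sum_Suc_diff'[OF True, of s]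
            by (simp only: sum_subtractf sum_negf)
          finally show ?thesis by (simp add: s_def)
        next
          case False then show ?thesis by (simp add: s_def)
        qed
      qed
      also have "\<dots> = \<sigma>"
      proof (rule eq_matI)
        fix i j assume "i < dim_row \<sigma>" "j < dim_col \<sigma>"
        then have ij: "i < d" "j < d" using car by auto
        show "dmat d (\<lambda>i. complex_of_real (s i)) $$ (i, j) = \<sigma> $$ (i, j)"
        proof (cases "i = j")
          case True then show ?thesis using ij psd_diag_real(1)[OF ps ij(1)] by (simp add: s_def)
        next
          case False then show ?thesis using ij off by simp
        qed
      qed (use car in auto)
      finally show ?thesis .
    qed
    have "mtrace \<rho> = 1"
    proof -
      have "mtrace \<rho> = (\<Sum>k<d. \<rho> $$ (k,k))" unfolding \<rho>_def mtrace_dmat by simp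
      also have "\<dots> = mtrace (Pmap d \<rho>)" by (simp add: trace_Pmap)
      finally show ?thesis using P tr by simp
    qed
    then have "\<rho> \<in> states d" using psr by (simp add: states_def)
    then show "\<sigma> \<in> Pmap d ` states d" using P by (metis image_eqI)
  qed
qed



lemma Qmap_corr: assumes "\<And>i. i < d \<Longrightarrow> \<xi> $$ (i,i) = 1" shows "Qmap d \<xi> = 1\<^sub>m d"
proof (rule eq_matI)
  fix i j assume "i < dim_row (1\<^sub>m d)" "j < dim_col (1\<^sub>m d)"
  then have ij: "i < d" "j < d" by auto
  have "(\<Sum>j\<in>{..i}. \<xi> $$ (j,j)) = (\<Sum>j\<in>{..i}. 1)" using assms ij by (intro sum.cong refl) auto
  then have "(\<Sum>j\<in>{..i}. \<xi> $$ (j,j)) / of_nat (Suc i) = 1" using nz[of i] by simp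
  then show "Qmap d \<xi> $$ (i, j) = 1\<^sub>m d $$ (i, j)" using ij by (cases "i = j") (simp_all add: Qmap_def)
qed (simp_all add: Qmap_def)

definition sig :: "nat \<Rightarrow> nat \<Rightarrow> complex mat" where
  "sig d k = dmat d (\<lambda>j. if j \<le> k then complex_of_real (1 / real (Suc k)) else 0)"

lemma sig_passive: assumes "k < d" shows "sig d k \<in> passive_states d"
proof -
  have ps: "psd d (sig d k)" unfolding sig_def by (rule psd_dmat) simp
  have "mtrace (sig d k) = (\<Sum>j<d. if j \<le> k then complex_of_real (1 / real (Suc k)) else 0)"
    unfolding sig_def mtrace_dmat ..
  also have "\<dots> = (\<Sum>j\<in>{j\<in>{..<d}. j \<le> k}. complex_of_real (1 / real (Suc k)))"
    by (rule sum.inter_filter[symmetric]) simp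
  also have "{j\<in>{..<d}. j \<le> k} = {..k}" using assms by auto
  also have "(\<Sum>j\<in>{..k}. complex_of_real (1 / real (Suc k))) = 1"
    by (simp add: nz field_simps)
  finally have tr: "mtrace (sig d k) = 1" .
  show ?thesis unfolding passive_states_def states_def using ps tr
    by (auto simp: sig_def)
qed

lemma mtrace_sig: assumes "\<xi> \<in> carrier_mat d d" "k < d"
  shows "mtrace (\<xi> * sig d k) = (\<Sum>i\<in>{..k}. \<xi> $$ (i,i)) / of_nat (Suc k)"
proof -
  have "mtrace (\<xi> * sig d k) = (\<Sum>i<d. \<xi> $$ (i,i) * (if i \<le> k then complex_of_real (1 / real (Suc k)) else 0))"
    unfolding sig_def using assms(1) by (rule mtrace_mult_dmat)
  also have "\<dots> = (\<Sum>i<d. if i \<le> k then \<xi> $$ (i,i) * complex_of_real (1 / real (Suc k)) else 0)"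
    by (simp only: ifz2)
  also have "\<dots> = (\<Sum>i\<in>{i\<in>{..<d}. i \<le> k}. \<xi> $$ (i,i) * complex_of_real (1 / real (Suc k)))"
    by (rule sum.inter_filter[symmetric]) simp
  also have "{i\<in>{..<d}. i \<le> k} = {..k}" using assms by auto
  also have "(\<Sum>i\<in>{..k}. \<xi> $$ (i,i) * complex_of_real (1 / real (Suc k))) = (\<Sum>i\<in>{..k}. \<xi> $$ (i,i)) / of_nat (Suc k)"
    by (simp add: sum_distrib_right[symmetric] divide_inverse)
  finally show ?thesis .
qed

theorem mainTheorem7:
  fixes d :: nat and \<xi> :: "complex mat"
  assumes "0 < d"
    and "psd d \<xi>"
  shows "correlation_matrix d \<xi> \<longleftrightarrow>
    (\<exists>P Q. quantum_channel d P \<and> P ` states d = passive_states d \<and>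
           is_adjoint d P Q \<and> Q \<xi> = 1\<^sub>m d)"
proof
  assume "correlation_matrix d \<xi>"
  then have diag: "\<And>i. i < d \<Longrightarrow> \<xi> $$ (i,i) = 1" by (simp add: correlation_matrix_def)
  have tp: "trace_preserving d (Pmap d)"
    unfolding trace_preserving_def by (simp add: trace_Pmap mtrace_car)
  have "quantum_channel d (Pmap d)"
    unfolding quantum_channel_def using linear_Pmap cp_Pmap[OF assms(1)] tp by blast
  then show "\<exists>P Q. quantum_channel d P \<and> P ` states d = passive_states d \<and>
           is_adjoint d P Q \<and> Q \<xi> = 1\<^sub>m d"
    using image_P[OF assms(1)] adjoint_PQ Qmap_corr[OF diag] by blast
next
  assume "\<exists>P Q. quantum_channel d P \<and> P ` states d = passive_states d \<and>
           is_adjoint d P Q \<and> Q \<xi> = 1\<^sub>m d"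
  then obtain P Q where im: "P ` states d = passive_states d" and adj: "is_adjoint d P Q"
    and Q: "Q \<xi> = 1\<^sub>m d" by blast
  have car: "\<xi> \<in> carrier_mat d d" using assms(2) by (simp add: psd_def)
  have S: "(\<Sum>i\<in>{..k}. \<xi> $$ (i,i)) = of_nat (Suc k)" if k: "k < d" for k
  proof -
    have "sig d k \<in> P ` states d" using sig_passive[OF k] im by simp
    then obtain B where B: "B \<in> states d" "P B = sig d k" by auto
    have Bc: "B \<in> carrier_mat d d" and Bt: "mtrace B = 1" using B(1) by (auto simp: states_def psd_def)
    have "mtrace (\<xi> * P B) = mtrace (Q \<xi> * B)" using adj car Bc by (simp add: is_adjoint_def)
    also have "\<dots> = 1" using Q Bc Bt by simp
    finally have "(\<Sum>i\<in>{..k}. \<xi> $$ (i,i)) / of_nat (Suc k) = 1"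
      using mtrace_sig[OF car k] B(2) by simp
    then show ?thesis using nz[of k] by (simp add: field_simps)
  qed
  have "\<xi> $$ (i,i) = 1" if "i < d" for i
  proof (cases i)
    case 0 then show ?thesis using S[of 0] that by simp
  next
    case (Suc m)
    have "(\<Sum>j\<in>{..Suc m}. \<xi> $$ (j,j)) = (\<Sum>j\<in>{..m}. \<xi> $$ (j,j)) + \<xi> $$ (Suc m, Suc m)" by simp
    then show ?thesis using S[of m] S[of "Suc m"] that Suc by simp
  qed
  then show "correlation_matrix d \<xi>" using assms(2) by (simp add: correlation_matrix_def)
qed


end
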